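(* Let $\Omega=\mathcal{C}_0([0,\infty),\mathbb{R}^d)$ with the topology of uniform convergence on compacts, and let $\mathcal{E}$ be a $G$-expectation, extended to $\mathcal{C}_b(\Omega)$ by $\mathcal{E}(f)=\sup_{P\in\mathcal{P}}E_P(f)$, where $\mathcal{P}$ is a weakly relatively compact set of Borel probability measures representing $\mathcal{E}$. There is a countable weakly relatively compact set $\{Q_n,\ n\in\mathbb{N}\}\subset\mathcal{P}$ such that $\mathcal{E}(X)=\sup_{n\in\mathbb{N}}E_{Q_n}(X)$ for all $X\in\mathcal{C}_b(\Omega)$. With $P=\sum_{n\in\mathbb{N}^*}Q_n/2^{n+1}$, for every $f\ge0$ in $\mathcal{C}_b(\Omega)$, $\mathcal{E}(f)=0$ iff $f=0$ $P$-a.s. For every $X\in\mathcal{C}_b(\Omega)$ there is a probability measure $Q_X$ in the weak closure of $\{Q_n\}$ with $\mathcal{E}(X)=E_{Q_X}(X)$.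
   Context: A $G$-expectation in the sense of Peng is a sublinear expectation on a vector lattice of functions in $\mathcal{C}_b(\Omega)$ containing $1$; it is known (from earlier work) that such $\mathcal{E}$ admits a representation $\mathcal{E}(f)=\sup_{P\in\mathcal{P}}E_P(f)$ by a weakly relatively compact set $\mathcal{P}$ of Borel probability measures on $\Omega$, which is used to extend $\mathcal{E}$ to $\mathcal{C}_b(\Omega)$. Weak topology: the coarsest making $\mu\mapsto\int f\,d\mu$ continuous for all $f\in\mathcal{C}_b(\Omega)$. *)

theory Defs
  imports "HOL-Analysis.Analysis" "HOL-Probability.Probability"
begin

text \<open>A path on [0,oo) is represented by a function on the reals that is
continuous on [0,oo), starts at 0, and is (by convention) 0 on the negative
reals, so that paths correspond one-to-one to such functions.\<close>

definition Omega :: "(real \<Rightarrow> real^'d::finite) set" where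
  "Omega = {w. continuous_on {0..} w \<and> w 0 = 0 \<and> (\<forall>t<0. w t = 0)}"

definition ucc_open :: "(real \<Rightarrow> real^'d::finite) set \<Rightarrow> bool" where
  "ucc_open U \<longleftrightarrow> U \<subseteq> Omega \<and>
     (\<forall>w\<in>U. \<exists>T>0. \<exists>e>0. \<forall>w'\<in>Omega. (\<forall>t\<in>{0..T}. dist (w' t) (w t) < e) \<longrightarrow> w' \<in> U)"

lemma istopology_ucc_open: "istopology ucc_open"
  unfolding istopology_def
proof (intro conjI allI impI)
  fix S T :: "(real \<Rightarrow> real^'d) set"
  assume S: "ucc_open S" and T: "ucc_open T"
  show "ucc_open (S \<inter> T)"
    unfolding ucc_open_def
  proof (intro conjI ballI)
    show "S \<inter> T \<subseteq> Omega" using S unfolding ucc_open_def by blast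
  next
    fix w assume w: "w \<in> S \<inter> T"
    obtain T1 e1 where 1: "T1 > 0" "e1 > 0"
      "\<forall>w'\<in>Omega. (\<forall>t\<in>{0..T1}. dist (w' t) (w t) < e1) \<longrightarrow> w' \<in> S"
      using S w unfolding ucc_open_def by blast
    obtain T2 e2 where 2: "T2 > 0" "e2 > 0"
      "\<forall>w'\<in>Omega. (\<forall>t\<in>{0..T2}. dist (w' t) (w t) < e2) \<longrightarrow> w' \<in> T"
      using T w unfolding ucc_open_def by blast
    have key: "\<forall>w'\<in>Omega. (\<forall>t\<in>{0..max T1 T2}. dist (w' t) (w t) < min e1 e2) \<longrightarrow> w' \<in> S \<inter> T"
    proof (intro ballI impI)
      fix w' assume w': "w' \<in> Omega" and d: "\<forall>t\<in>{0..max T1 T2}. dist (w' t) (w t) < min e1 e2"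
      have a: "\<forall>t\<in>{0..T1}. dist (w' t) (w t) < e1"
      proof
        fix t assume "t \<in> {0..T1}"
        then have "t \<in> {0..max T1 T2}" by auto
        then have "dist (w' t) (w t) < min e1 e2" using d by blast
        then show "dist (w' t) (w t) < e1" by linarith
      qed
      have b: "\<forall>t\<in>{0..T2}. dist (w' t) (w t) < e2"
      proof
        fix t assume "t \<in> {0..T2}"
        then have "t \<in> {0..max T1 T2}" by auto
        then have "dist (w' t) (w t) < min e1 e2" using d by blast
        then show "dist (w' t) (w t) < e2" by linarith
      qed
      have "w' \<in> S" using 1(3) w' a by simp
      moreover have "w' \<in> T" using 2(3) w' b by simp
      ultimately show "w' \<in> S \<inter> T" by (rule IntI)
    qed
    have pos: "max T1 T2 > 0" "min e1 e2 > 0" using 1 2 by auto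
    show "\<exists>T0>0. \<exists>e>0. \<forall>w'\<in>Omega. (\<forall>t\<in>{0..T0}. dist (w' t) (w t) < e) \<longrightarrow> w' \<in> S \<inter> T"
      by (rule exI[of _ "max T1 T2"], rule conjI[OF pos(1)], rule exI[of _ "min e1 e2"], rule conjI[OF pos(2)], rule key)
  qed
next
  fix K :: "(real \<Rightarrow> real^'d) set set"
  assume "\<forall>U\<in>K. ucc_open U"
  then have H: "\<And>U. U \<in> K \<Longrightarrow> ucc_open U" by blast
  show "ucc_open (\<Union>K)"
    unfolding ucc_open_def
  proof (intro conjI ballI)
    show "\<Union>K \<subseteq> Omega" using H unfolding ucc_open_def by blast
  next
    fix w assume "w \<in> \<Union>K"
    then obtain U where U: "U \<in> K" "w \<in> U" by blast
    then obtain T0 e where Te: "T0 > 0" "e > 0"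
      "\<forall>w'\<in>Omega. (\<forall>t\<in>{0..T0}. dist (w' t) (w t) < e) \<longrightarrow> w' \<in> U"
      using H[OF U(1)] unfolding ucc_open_def by blast
    have "\<forall>w'\<in>Omega. (\<forall>t\<in>{0..T0}. dist (w' t) (w t) < e) \<longrightarrow> w' \<in> \<Union>K"
      using Te(3) U(1) by blast
    then show "\<exists>T0>0. \<exists>e>0. \<forall>w'\<in>Omega. (\<forall>t\<in>{0..T0}. dist (w' t) (w t) < e) \<longrightarrow> w' \<in> \<Union>K"
      using Te(1,2) by blast
  qed
qed

definition Omega_top :: "(real \<Rightarrow> real^'d::finite) topology" where
  "Omega_top = topology ucc_open"

definition borel_of :: "'a topology \<Rightarrow> 'a measure" where
  "borel_of X = sigma (topspace X) {U. openin X U}"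

definition Cb :: "'a topology \<Rightarrow> ('a \<Rightarrow> real) set" where
  "Cb X = {f. continuous_map X euclideanreal f \<and> (\<exists>B. \<forall>x\<in>topspace X. \<bar>f x\<bar> \<le> B)}"

definition borel_probs :: "'a topology \<Rightarrow> 'a measure set" where
  "borel_probs X = {P. prob_space P \<and> sets P = sets (borel_of X)}"

definition weak_topology :: "'a topology \<Rightarrow> 'a measure topology" where
  "weak_topology X = topology_generated_by
     {{\<mu> \<in> borel_probs X. integral\<^sup>L \<mu> f \<in> U} | f U. f \<in> Cb X \<and> open U}"

definition weakly_rel_compact :: "'a topology \<Rightarrow> 'a measure set \<Rightarrow> bool" where
  "weakly_rel_compact X A \<longleftrightarrow> A \<subseteq> borel_probs X \<and>
     compactin (weak_topology X) (weak_topology X closure_of A)"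

definition vector_lattice_with_one :: "'a set \<Rightarrow> ('a \<Rightarrow> real) set \<Rightarrow> bool" where
  "vector_lattice_with_one S H \<longleftrightarrow>
     (\<lambda>_. 1) \<in> H \<and>
     (\<forall>f\<in>H. \<forall>g\<in>H. (\<lambda>x. f x + g x) \<in> H) \<and>
     (\<forall>f\<in>H. \<forall>c. (\<lambda>x. c * f x) \<in> H) \<and>
     (\<forall>f\<in>H. \<forall>g\<in>H. (\<lambda>x. max (f x) (g x)) \<in> H)"

definition sublinear_expectation :: "'a set \<Rightarrow> ('a \<Rightarrow> real) set \<Rightarrow> (('a \<Rightarrow> real) \<Rightarrow> real) \<Rightarrow> bool" where
  "sublinear_expectation S H E \<longleftrightarrow>
     (\<forall>f\<in>H. \<forall>g\<in>H. (\<forall>x\<in>S. f x \<le> g x) \<longrightarrow> E f \<le> E g) \<and>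
     (\<forall>c. E (\<lambda>_. c) = c) \<and>
     (\<forall>f\<in>H. \<forall>g\<in>H. E (\<lambda>x. f x + g x) \<le> E f + E g) \<and>
     (\<forall>f\<in>H. \<forall>c\<ge>0. E (\<lambda>x. c * f x) = c * E f)"

definition mixture :: "'a topology \<Rightarrow> (nat \<Rightarrow> 'a measure) \<Rightarrow> 'a measure" where
  "mixture X Q = measure_of (topspace X) (sets (borel_of X))
     (\<lambda>A. \<Sum>n. emeasure (Q n) A / 2 ^ Suc n)"

end

theory Submission
  imports Defs
begin


lemma openin_Omega_top: "openin Omega_top U \<longleftrightarrow> ucc_open U"
  unfolding Omega_top_def by (metis topology_inverse'[OF istopology_ucc_open])

lemma topspace_Omega_top: "topspace Omega_top = Omega"
proof -
  have "ucc_open Omega" unfolding ucc_open_def by (auto intro: exI[of _ 1])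
  then have "Omega \<subseteq> topspace Omega_top"
    using openin_subset openin_Omega_top by metis
  moreover have "topspace Omega_top \<subseteq> Omega"
    using openin_Omega_top[of "topspace Omega_top"] ucc_open_def by auto
  ultimately show ?thesis by auto
qed

lemma cont_Omega:
  assumes "\<And>w r. w \<in> Omega \<Longrightarrow> r > 0 \<Longrightarrow> \<exists>T>0. \<exists>e>0. \<forall>w'\<in>Omega.
      (\<forall>t\<in>{0..T}. dist (w' t) (w t) < e) \<longrightarrow> \<bar>\<phi> w' - \<phi> w\<bar> < r"
  shows "continuous_map Omega_top euclideanreal \<phi>"
  unfolding continuous_map_def
proof (intro conjI allI impI)
  show "\<phi> \<in> topspace Omega_top \<rightarrow> topspace euclideanreal" by simp
  fix U :: "real set" assume "openin euclideanreal U"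
  then have oU: "open U" by simp
  show "openin Omega_top {x \<in> topspace Omega_top. \<phi> x \<in> U}"
    unfolding openin_Omega_top topspace_Omega_top ucc_open_def
  proof (intro conjI ballI)
    fix w assume w: "w \<in> {x \<in> Omega. \<phi> x \<in> U}"
    obtain r where r: "r > 0" "ball (\<phi> w) r \<subseteq> U" using oU w open_contains_ball by blast
    obtain T e where Te: "T > 0" "e > 0" "\<forall>w'\<in>Omega.
      (\<forall>t\<in>{0..T}. dist (w' t) (w t) < e) \<longrightarrow> \<bar>\<phi> w' - \<phi> w\<bar> < r"
      using assms[of w r] w r by auto
    show "\<exists>T>0. \<exists>e>0. \<forall>w'\<in>Omega. (\<forall>t\<in>{0..T}. dist (w' t) (w t) < e) \<longrightarrow> w' \<in> {x \<in> Omega. \<phi> x \<in> U}"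
    proof (intro exI conjI ballI impI)
      fix w' assume "w' \<in> Omega" "\<forall>t\<in>{0..T}. dist (w' t) (w t) < e"
      then have "\<bar>\<phi> w' - \<phi> w\<bar> < r" using Te by blast
      then have "\<phi> w' \<in> ball (\<phi> w) r" by (simp add: dist_real_def abs_minus_commute)
      then show "w' \<in> {x \<in> Omega. \<phi> x \<in> U}" using r \<open>w' \<in> Omega\<close> by auto
    qed (use Te in auto)
  qed auto
qed

definition rho :: "nat \<Rightarrow> (real \<Rightarrow> real^'d::finite) \<Rightarrow> (real \<Rightarrow> real^'d) \<Rightarrow> real" where
  "rho n w v = Sup ((\<lambda>t. min 1 (dist (w t) (v t))) ` {0..real n})"

lemma rho_upper: "t \<in> {0..real n} \<Longrightarrow> min 1 (dist (w t) (v t)) \<le> rho n w v"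
  unfolding rho_def by (rule cSup_upper) (auto intro!: bdd_aboveI[of _ 1])

lemma rho_le: "(\<And>t. t \<in> {0..real n} \<Longrightarrow> min 1 (dist (w t) (v t)) \<le> c) \<Longrightarrow> rho n w v \<le> c"
  unfolding rho_def by (rule cSup_least) auto

lemma rho_nonneg: "0 \<le> rho n w v"
  using rho_upper[of 0 n w v] by (smt (verit) atLeastAtMost_iff of_nat_0_le_iff zero_le_dist)

lemma rho_lt: "rho n w v < e \<Longrightarrow> e \<le> 1 \<Longrightarrow> t \<in> {0..real n} \<Longrightarrow> dist (w t) (v t) < e"
  using rho_upper[of t n w v] by linarith

lemma rho_cont:
  fixes v :: "real \<Rightarrow> real^'d::finite"
  shows "continuous_map Omega_top euclideanreal (\<lambda>w. rho n w v)"
proof (rule cont_Omega)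
  fix w :: "real \<Rightarrow> real^'d" and r :: real assume "w \<in> Omega" "r > 0"
  show "\<exists>T>0. \<exists>e>0. \<forall>w'\<in>Omega.
      (\<forall>t\<in>{0..T}. dist (w' t) (w t) < e) \<longrightarrow> \<bar>rho n w' v - rho n w v\<bar> < r"
  proof (rule exI[of _ "real n + 1"], rule conjI, simp, rule exI[of _ "r/2"], rule conjI, simp add: \<open>r > 0\<close>, intro ballI impI)
    fix w' assume "w' \<in> Omega" and d: "\<forall>t\<in>{0..real n + 1}. dist (w' t) (w t) < r / 2"
    have d': "dist (w' t) (w t) < r/2" if "t \<in> {0..real n}" for t using d that by auto
    have "rho n w' v \<le> rho n w v + r/2"
    proof (rule rho_le)
      fix t assume t: "t \<in> {0..real n}"
      have "dist (w' t) (v t) \<le> dist (w t) (v t) + dist (w' t) (w t)"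
        by (metis dist_commute dist_triangle add.commute)
      then show "min 1 (dist (w' t) (v t)) \<le> rho n w v + r/2"
        using rho_upper[OF t, of w v] d'[OF t] \<open>r > 0\<close> by (auto simp: min_def split: if_splits)
    qed
    moreover have "rho n w v \<le> rho n w' v + r/2"
    proof (rule rho_le)
      fix t assume t: "t \<in> {0..real n}"
      have "dist (w t) (v t) \<le> dist (w' t) (v t) + dist (w' t) (w t)"
        by (metis dist_commute dist_triangle add.commute)
      then show "min 1 (dist (w t) (v t)) \<le> rho n w' v + r/2"
        using rho_upper[OF t, of w' v] d'[OF t] \<open>r > 0\<close> by (auto simp: min_def split: if_splits)
    qed
    ultimately show "\<bar>rho n w' v - rho n w v\<bar> < r" using \<open>r > 0\<close> by linarith
  qed
qed


lemma space_borel_of: "space (borel_of X) = topspace X"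
  unfolding borel_of_def by (rule space_measure_of) (auto dest: openin_subset)

lemma sets_borel_of: "sets (borel_of X) = sigma_sets (topspace X) {U. openin X U}"
  unfolding borel_of_def by (rule sets_measure_of) (auto dest: openin_subset)

lemma cont_borel:
  assumes "continuous_map X euclideanreal f"
  shows "f \<in> borel_measurable (borel_of X)"
proof (rule borel_measurableI)
  fix S :: "real set" assume "open S"
  then have "openin X {x \<in> topspace X. f x \<in> S}" using assms unfolding continuous_map_def by auto
  moreover have "f -` S \<inter> space (borel_of X) = {x \<in> topspace X. f x \<in> S}"
    by (auto simp: space_borel_of)
  ultimately show "f -` S \<inter> space (borel_of X) \<in> sets (borel_of X)"
    by (simp add: sets_borel_of sigma_sets.Basic)
qed

lemma bp_prob: "P \<in> borel_probs X \<Longrightarrow> prob_space P"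
  unfolding borel_probs_def by auto

lemma bp_sets: "P \<in> borel_probs X \<Longrightarrow> sets P = sets (borel_of X)"
  unfolding borel_probs_def by auto

lemma bp_space: "P \<in> borel_probs X \<Longrightarrow> space P = topspace X"
  using bp_sets sets_eq_imp_space_eq space_borel_of by metis

lemma Cb_meas: "f \<in> Cb X \<Longrightarrow> P \<in> borel_probs X \<Longrightarrow> f \<in> borel_measurable P"
  using cont_borel[of X f] measurable_cong_sets[OF bp_sets refl] unfolding Cb_def by blast

lemma Cb_bound: "f \<in> Cb X \<Longrightarrow> \<exists>B. \<forall>x\<in>topspace X. \<bar>f x\<bar> \<le> B"
  unfolding Cb_def by auto

lemma Cb_int: "f \<in> Cb X \<Longrightarrow> P \<in> borel_probs X \<Longrightarrow> integrable P f"
proof -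
  assume f: "f \<in> Cb X" and P: "P \<in> borel_probs X"
  obtain B where B: "\<forall>x\<in>topspace X. \<bar>f x\<bar> \<le> B" using Cb_bound[OF f] by auto
  interpret prob_space P using bp_prob[OF P] .
  show ?thesis
    by (rule integrable_const_bound[of _ B]) (use B bp_space[OF P] Cb_meas[OF f P] in auto)
qed

lemma Cb_int_bound:
  assumes f: "f \<in> Cb X" and P: "P \<in> borel_probs X" and B: "\<forall>x\<in>topspace X. \<bar>f x\<bar> \<le> B"
  shows "\<bar>integral\<^sup>L P f\<bar> \<le> B"
proof -
  interpret prob_space P using bp_prob[OF P] .
  have "\<bar>integral\<^sup>L P f\<bar> \<le> integral\<^sup>L P (\<lambda>x. \<bar>f x\<bar>)"
    using integral_norm_bound[of P f] by simp
  also have "\<dots> \<le> integral\<^sup>L P (\<lambda>_. B)"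
    by (rule integral_mono_AE) (use Cb_int[OF f P] B bp_space[OF P] in auto)
  finally show ?thesis by (simp add: prob_space)
qed

lemma Cb_mono:
  assumes f: "f \<in> Cb X" and g: "g \<in> Cb X" and P: "P \<in> borel_probs X"
    and le: "\<forall>x\<in>topspace X. f x \<le> g x"
  shows "integral\<^sup>L P f \<le> integral\<^sup>L P g"
  by (rule integral_mono_AE) (use Cb_int[OF f P] Cb_int[OF g P] le bp_space[OF P] in auto)

lemma Cb_const: "(\<lambda>_. c) \<in> Cb X"
  unfolding Cb_def by auto

lemma Cb_add: "f \<in> Cb X \<Longrightarrow> g \<in> Cb X \<Longrightarrow> (\<lambda>x. f x + g x) \<in> Cb X"
proof -
  assume f: "f \<in> Cb X" and g: "g \<in> Cb X"
  obtain B1 where "\<forall>x\<in>topspace X. \<bar>f x\<bar> \<le> B1" using Cb_bound[OF f] by auto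
  moreover obtain B2 where "\<forall>x\<in>topspace X. \<bar>g x\<bar> \<le> B2" using Cb_bound[OF g] by auto
  ultimately have "\<forall>x\<in>topspace X. \<bar>f x + g x\<bar> \<le> B1 + B2" by (metis abs_triangle_ineq add_mono order_trans)
  with f g show ?thesis unfolding Cb_def by (auto intro: continuous_map_add)
qed

lemma Cb_neg: "f \<in> Cb X \<Longrightarrow> (\<lambda>x. - f x) \<in> Cb X"
  unfolding Cb_def by auto


definition vfun :: "nat \<times> nat \<times> ('d \<Rightarrow> int) list \<Rightarrow> real \<Rightarrow> real^'d::finite" where
  "vfun V t = (case V of (N, M, L) \<Rightarrow> (\<chi> i. real_of_int ((L ! nat \<lfloor>t * real N\<rfloor>) i) / real M))"

lemma grid_approx:
  fixes x :: "real^'d::finite"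
  assumes "M > 0"
  shows "dist x (\<chi> i. real_of_int \<lfloor>x$i * M\<rfloor> / M) \<le> CARD('d) / M"
proof -
  have c: "\<bar>x$i - real_of_int \<lfloor>x$i * M\<rfloor> / M\<bar> \<le> 1 / M" for i
  proof -
    have "real_of_int \<lfloor>x$i * M\<rfloor> \<le> x$i * M" "x$i * M < real_of_int \<lfloor>x$i * M\<rfloor> + 1"
      by linarith+
    then have "real_of_int \<lfloor>x$i * M\<rfloor> / M \<le> x$i" "x$i < real_of_int \<lfloor>x$i * M\<rfloor> / M + 1 / M"
      using assms by (auto simp: field_simps)
    then show ?thesis by auto
  qed
  have "dist x (\<chi> i. real_of_int \<lfloor>x$i * M\<rfloor> / M) \<le> (\<Sum>i\<in>UNIV. \<bar>(x - (\<chi> i. real_of_int \<lfloor>x$i * M\<rfloor> / M))$i\<bar>)"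
    unfolding dist_norm by (rule norm_le_l1_cart)
  also have "\<dots> \<le> (\<Sum>i\<in>(UNIV::'d set). 1 / M)"
    by (rule sum_mono) (use c in simp)
  also have "\<dots> = CARD('d) / M" by simp
  finally show ?thesis .
qed

lemma vfun_approx:
  fixes w :: "real \<Rightarrow> real^'d::finite"
  assumes w: "w \<in> Omega" and e: "e > 0"
  shows "\<exists>V. rho n w (vfun V) < e"
proof -
  have "continuous_on {0..real n} w"
    using w unfolding Omega_def by (auto intro: continuous_on_subset)
  then have "uniformly_continuous_on {0..real n} w"
    by (rule compact_uniformly_continuous) simp
  then obtain d where d: "d > 0" "\<And>x x'. x \<in> {0..real n} \<Longrightarrow> x' \<in> {0..real n} \<Longrightarrow> dist x' x < d \<Longrightarrow> dist (w x') (w x) < e/3"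
    unfolding uniformly_continuous_on_def using e by (metis divide_pos_pos zero_less_numeral)
  obtain N :: nat where N: "1 / d < real N" using reals_Archimedean2 by blast
  have Npos: "real N > 0" using N d by (smt (verit) divide_pos_pos)
  have Nd: "1 / real N < d" using N d Npos by (simp add: field_simps)
  obtain M :: nat where M: "3 * CARD('d) / e < real M" using reals_Archimedean2 by blast
  have Mpos: "real M > 0" using M e by (smt (verit) divide_pos_pos of_nat_0_less_iff zero_less_card_finite mult_pos_pos zero_less_numeral of_nat_0_le_iff)
  have Me: "CARD('d) / real M < e / 3" using M e Mpos by (simp add: field_simps)
  define L where "L = map (\<lambda>k. \<lambda>i. \<lfloor>(w (real k / real N))$i * real M\<rfloor>) [0..<n*N+1]"
  have "rho n w (vfun (N, M, L)) \<le> 2 * e / 3"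
  proof (rule rho_le)
    fix t assume t: "t \<in> {0..real n}"
    define k where "k = nat \<lfloor>t * real N\<rfloor>"
    have tN: "0 \<le> t * real N" using t Npos by auto
    have k1: "real k \<le> t * real N" "t * real N < real k + 1"
      unfolding k_def using tN by linarith+
    have "t * real N \<le> real n * real N" using t Npos by (auto intro: mult_right_mono)
    then have "real k \<le> real (n * N)" using k1 by simp
    then have klt: "k < n * N + 1" by linarith
    have kN1: "real k / real N \<le> t" using k1 Npos by (simp add: field_simps)
    have kN2: "t < real k / real N + 1 / real N" using k1 Npos by (simp add: field_simps)
    have kin: "real k / real N \<in> {0..real n}" using kN1 t by auto
    have "dist t (real k / real N) < d" using kN1 kN2 Nd by (simp add: dist_real_def)
    then have D1: "dist (w t) (w (real k / real N)) < e/3" using d(2)[OF kin t] by simp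
    have vt: "vfun (N, M, L) t = (\<chi> i. real_of_int \<lfloor>(w (real k / real N))$i * real M\<rfloor> / real M)"
    proof -
      have Lk: "L ! nat \<lfloor>t * real N\<rfloor> = (\<lambda>i. \<lfloor>(w (real k / real N))$i * real M\<rfloor>)"
        using klt unfolding L_def k_def by (simp del: upt_Suc)
      show ?thesis by (simp add: vfun_def Lk)
    qed
    have D2: "dist (w (real k / real N)) (vfun (N, M, L) t) < e/3"
      unfolding vt using grid_approx[OF Mpos, of "w (real k / real N)"] Me by linarith
    have "dist (w t) (vfun (N, M, L) t) < 2 * e / 3"
      using dist_triangle[of "w t" "vfun (N, M, L) t" "w (real k / real N)"] D1 D2 by linarith
    then show "min 1 (dist (w t) (vfun (N, M, L) t)) \<le> 2 * e / 3" by linarith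
  qed
  then show ?thesis using e by (intro exI[of _ "(N, M, L)"]) linarith
qed


type_synonym 'd atomT = "rat \<times> (nat \<times> nat \<times> ('d \<Rightarrow> int) list) \<times> nat \<times> rat \<times> nat"

definition atom :: "'d::finite atomT \<Rightarrow> (real \<Rightarrow> real^'d) \<Rightarrow> real" where
  "atom a w = (case a of (c, V, n, e, m) \<Rightarrow>
     max 0 (real_of_rat c) * min 1 (real m * max 0 (real_of_rat e - rho n w (vfun V))))"

lemma atom_nonneg: "0 \<le> atom a w"
  unfolding atom_def by (auto split: prod.splits)

lemma atom_le: "atom a w \<le> max 0 (real_of_rat (fst a))"
  unfolding atom_def by (auto split: prod.splits intro!: mult_left_le)

lemma atom_cont: "continuous_map Omega_top euclideanreal (atom a)"
proof -
  obtain c V n e m where a: "a = (c, V, n, e, m)" by (cases a) auto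
  have "atom a = (\<lambda>w. max 0 (real_of_rat c) * min 1 (real m * max 0 (real_of_rat e - rho n w (vfun V))))"
    by (auto simp: atom_def a)
  moreover have "continuous_map Omega_top euclideanreal (\<lambda>w. max 0 (real_of_rat c) * min 1 (real m * max 0 (real_of_rat e - rho n w (vfun V))))"
    by (intro continuous_map_real_mult continuous_map_real_min continuous_map_real_max continuous_map_diff continuous_map_const[THEN iffD2] rho_cont) auto
  ultimately show ?thesis by simp
qed

fun gfun :: "'d::finite atomT list \<Rightarrow> (real \<Rightarrow> real^'d) \<Rightarrow> real" where
  "gfun [] w = 0"
| "gfun (a # L) w = max (atom a w) (gfun L w)"

lemma gfun_nonneg: "0 \<le> gfun L w"
  by (induction L) auto

lemma gfun_ge: "a \<in> set L \<Longrightarrow> atom a w \<le> gfun L w"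
  by (induction L) auto

lemma gfun_le: "(\<And>a. a \<in> set L \<Longrightarrow> atom a w \<le> c) \<Longrightarrow> 0 \<le> c \<Longrightarrow> gfun L w \<le> c"
  by (induction L) auto

lemma gfun_append: "gfun (L1 @ L2) w = max (gfun L1 w) (gfun L2 w)"
  by (induction L1) (auto simp: gfun_nonneg max.assoc)

lemma gfun_cont: "continuous_map Omega_top euclideanreal (gfun L)"
proof (induction L)
  case Nil
  have "gfun [] = (\<lambda>_. 0)" by auto
  then show ?case by simp
next
  case (Cons a L)
  have "gfun (a # L) = (\<lambda>w. max (atom a w) (gfun L w))" by auto
  then show ?case using Cons atom_cont by (metis continuous_map_real_max)
qed

lemma gfun_bound: "gfun L w \<le> sum_list (map (\<lambda>a. max 0 (real_of_rat (fst a))) L)"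
proof (induction L)
  case (Cons a L)
  have "0 \<le> sum_list (map (\<lambda>a. max 0 (real_of_rat (fst a))) L)"
    by (rule sum_list_nonneg) auto
  then show ?case using Cons atom_le[of a w] by auto
qed simp

lemma gfun_Cb: "gfun L \<in> Cb Omega_top"
proof -
  have "\<bar>gfun L x\<bar> \<le> sum_list (map (\<lambda>a. max 0 (real_of_rat (fst a))) L)" for x
    using gfun_bound[of L x] gfun_nonneg[of L x] by simp
  then show ?thesis unfolding Cb_def using gfun_cont by blast
qed

lemma atom_approx:
  fixes f :: "(real \<Rightarrow> real^'d::finite) \<Rightarrow> real" and w :: "real \<Rightarrow> real^'d"
  assumes f: "f \<in> Cb Omega_top" and nonneg: "\<forall>x\<in>Omega. 0 \<le> f x" and w: "w \<in> Omega"
    and eps: "\<epsilon> > 0"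
  shows "\<exists>a :: 'd atomT. (\<forall>x\<in>Omega. atom a x \<le> f x) \<and> f w - \<epsilon> < atom a w"
proof (cases "f w < \<epsilon>")
  case True
  let ?a = "(0::rat, (0, 0, []), 0, 0::rat, 0) :: 'd atomT"
  have "atom ?a x = 0" for x by (simp add: atom_def)
  then show ?thesis using nonneg True by (intro exI[of _ ?a]) auto
next
  case False
  obtain c where c: "c \<in> \<rat>" "f w - \<epsilon> < c" "c < f w"
    using Rats_dense_in_real[of "f w - \<epsilon>" "f w"] eps by auto
  have cpos: "c > 0" using c False by linarith
  obtain cq where cq: "c = real_of_rat cq" using c(1) Rats_cases by blast
  have "openin euclideanreal {c<..}" by simp
  then have "openin Omega_top {x \<in> topspace Omega_top. f x \<in> {c<..}}"
    using f unfolding Cb_def continuous_map_def by blast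
  then have O: "ucc_open {x \<in> Omega. c < f x}"
    by (simp add: openin_Omega_top topspace_Omega_top)
  have wO: "w \<in> {x \<in> Omega. c < f x}" using w c by auto
  obtain T0 e0 where T0: "T0 > 0" "e0 > 0"
    "\<forall>w'\<in>Omega. (\<forall>t\<in>{0..T0}. dist (w' t) (w t) < e0) \<longrightarrow> w' \<in> {x \<in> Omega. c < f x}"
    using O wO unfolding ucc_open_def by blast
  define n where "n = nat \<lceil>T0\<rceil>"
  have nT: "T0 \<le> real n" unfolding n_def by linarith
  obtain e where e: "e \<in> \<rat>" "0 < e" "e < min e0 1 / 2"
    using Rats_dense_in_real[of 0 "min e0 1 / 2"] T0 by auto
  obtain eq where eq: "e = real_of_rat eq" using e(1) Rats_cases by blast
  obtain V where V: "rho n w (vfun V) < e" using vfun_approx[OF w e(2)] by blast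
  define m where "m = nat \<lceil>1 / (e - rho n w (vfun V))\<rceil>"
  have m: "1 \<le> real m * (e - rho n w (vfun V))"
  proof -
    have "1 / (e - rho n w (vfun V)) \<le> real m" unfolding m_def by linarith
    then show ?thesis using V by (simp add: field_simps)
  qed
  let ?a = "(cq, V, n, eq, m)"
  have aw: "atom ?a w = c"
  proof -
    have "max 0 (e - rho n w (vfun V)) = e - rho n w (vfun V)" using V by simp
    moreover have "min 1 (real m * (e - rho n w (vfun V))) = 1" using m by simp
    ultimately show ?thesis using cpos by (simp add: atom_def flip: cq eq)
  qed
  have "atom ?a x \<le> f x" if x: "x \<in> Omega" for x
  proof (cases "rho n x (vfun V) < e")
    case True
    have "\<forall>t\<in>{0..T0}. dist (x t) (w t) < e0"
    proof
      fix t assume "t \<in> {0..T0}"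
      then have t: "t \<in> {0..real n}" using nT by auto
      have "dist (x t) (vfun V t) < e" using rho_lt[OF True _ t] e by linarith
      moreover have "dist (w t) (vfun V t) < e" using rho_lt[OF V _ t] e by linarith
      ultimately show "dist (x t) (w t) < e0"
        using dist_triangle3[of "x t" "w t" "vfun V t"] e by (simp add: dist_commute)
    qed
    then have "c < f x" using T0(3) x by blast
    moreover have "atom ?a x \<le> c" using atom_le[of ?a x] cq cpos by simp
    ultimately show ?thesis by linarith
  next
    case False
    then have "max 0 (real_of_rat eq - rho n x (vfun V)) = 0" using eq by simp
    then have "atom ?a x = 0" unfolding atom_def by simp
    then show ?thesis using nonneg x by simp
  qed
  then show ?thesis using aw c by (intro exI[of _ ?a]) auto
qed


lemma gfun_int_approx:
  fixes f :: "(real \<Rightarrow> real^'d::finite) \<Rightarrow> real"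
  assumes f: "f \<in> Cb Omega_top" and nonneg: "\<forall>x\<in>Omega. 0 \<le> f x"
    and mu: "\<mu> \<in> borel_probs Omega_top" and r: "r > 0"
  shows "\<exists>L :: 'd atomT list. (\<forall>x\<in>Omega. gfun L x \<le> f x) \<and> integral\<^sup>L \<mu> f - r < integral\<^sup>L \<mu> (gfun L)"
proof -
  define A where "A = {a :: 'd atomT. \<forall>x\<in>Omega. atom a x \<le> f x}"
  have a0: "(0::rat, (0, 0, []), 0, 0::rat, 0) \<in> A"
    unfolding A_def using nonneg by (auto simp: atom_def)
  then have Ane: "A \<noteq> {}" by auto
  have cA: "countable A" by simp
  define s where "s k = map (from_nat_into A) [0..<k]" for k
  define g where "g k = gfun (s k)" for k
  have sA: "a \<in> set (s k) \<Longrightarrow> a \<in> A" for a k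
    unfolding s_def using from_nat_into[OF Ane] by auto
  have gle: "g k x \<le> f x" if "x \<in> Omega" for k x
    unfolding g_def by (rule gfun_le) (use sA that nonneg in \<open>auto simp: A_def\<close>)
  have lim: "(\<lambda>k. g k x) \<longlonglongrightarrow> f x" if x: "x \<in> Omega" for x
  proof (rule LIMSEQ_I)
    fix \<epsilon> :: real assume "0 < \<epsilon>"
    then obtain a where a: "\<forall>y\<in>Omega. atom a y \<le> f y" "f x - \<epsilon> < atom a x"
      using atom_approx[OF f nonneg x] by blast
    then have aA: "a \<in> A" unfolding A_def by auto
    define j where "j = to_nat_on A a"
    have "\<forall>k\<ge>Suc j. norm (g k x - f x) < \<epsilon>"
    proof (intro allI impI)
      fix k assume k: "k \<ge> Suc j"
      have "a \<in> set (s k)" unfolding s_def j_def using k aA cA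
        by (auto intro!: image_eqI[of a _ j] simp: j_def)
      then have "atom a x \<le> g k x" unfolding g_def by (rule gfun_ge)
      then show "norm (g k x - f x) < \<epsilon>" using gle[OF x, of k] a by simp
    qed
    then show "\<exists>no. \<forall>k\<ge>no. norm (g k x - f x) < \<epsilon>" by blast
  qed
  have sp: "space \<mu> = Omega" using bp_space[OF mu] topspace_Omega_top by simp
  have conv: "(\<lambda>k. integral\<^sup>L \<mu> (g k)) \<longlonglongrightarrow> integral\<^sup>L \<mu> f"
  proof (rule integral_dominated_convergence[where w=f])
    show "f \<in> borel_measurable \<mu>" using Cb_meas[OF f mu] .
    show "g k \<in> borel_measurable \<mu>" for k unfolding g_def using Cb_meas[OF gfun_Cb mu] .
    show "integrable \<mu> f" using Cb_int[OF f mu] .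
    show "AE x in \<mu>. (\<lambda>k. g k x) \<longlonglongrightarrow> f x" using lim sp by auto
    show "AE x in \<mu>. norm (g k x) \<le> f x" for k
      using gle sp by (auto simp: g_def gfun_nonneg)
  qed
  then obtain k where "\<bar>integral\<^sup>L \<mu> (g k) - integral\<^sup>L \<mu> f\<bar> < r"
    using r by (metis LIMSEQ_D real_norm_def order_refl)
  then show ?thesis using gle unfolding g_def by (intro exI[of _ "s k"]) auto
qed


lemma int_shift:
  assumes f: "f \<in> Cb X" and P: "P \<in> borel_probs X"
  shows "integral\<^sup>L P (\<lambda>x. f x + c) = integral\<^sup>L P f + c"
    and "integral\<^sup>L P (\<lambda>x. c - f x) = c - integral\<^sup>L P f"
proof -
  interpret prob_space P using bp_prob[OF P] .
  show "integral\<^sup>L P (\<lambda>x. f x + c) = integral\<^sup>L P f + c"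
    using Cb_int[OF f P] by (simp add: prob_space)
  show "integral\<^sup>L P (\<lambda>x. c - f x) = c - integral\<^sup>L P f"
    using Cb_int[OF f P] by (simp add: prob_space)
qed

definition WS :: "('d::finite atomT list \<times> rat \<times> rat) list \<Rightarrow> (real \<Rightarrow> real^'d) measure set" where
  "WS K = {\<nu> \<in> borel_probs Omega_top. \<forall>(L, a, b) \<in> set K.
      real_of_rat a < integral\<^sup>L \<nu> (gfun L) \<and> integral\<^sup>L \<nu> (gfun L) < real_of_rat b}"

lemma WS_append: "WS (K1 @ K2) = WS K1 \<inter> WS K2"
  unfolding WS_def by (auto simp: Ball_def split: prod.splits)

lemma key_weak:
  fixes f :: "(real \<Rightarrow> real^'d::finite) \<Rightarrow> real"
  assumes f: "f \<in> Cb Omega_top" and mu: "\<mu> \<in> borel_probs Omega_top" and r: "r > 0"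
  shows "\<exists>K :: ('d atomT list \<times> rat \<times> rat) list. \<mu> \<in> WS K \<and>
    (\<forall>\<nu>\<in>WS K. \<bar>integral\<^sup>L \<nu> f - integral\<^sup>L \<mu> f\<bar> < r)"
proof -
  obtain B where B: "\<forall>x\<in>topspace Omega_top. \<bar>f x\<bar> \<le> B" using Cb_bound[OF f] by auto
  define f1 where "f1 = (\<lambda>x. f x + B)"
  define f2 where "f2 = (\<lambda>x. B - f x)"
  have f1: "f1 \<in> Cb Omega_top" unfolding f1_def by (rule Cb_add[OF f Cb_const])
  have f2: "f2 \<in> Cb Omega_top" unfolding f2_def
    using Cb_add[OF Cb_const Cb_neg[OF f], of B] by simp
  have n1: "\<forall>x\<in>Omega. 0 \<le> f1 x" using B topspace_Omega_top unfolding f1_def by (metis abs_le_iff add.commute le_minus_iff neg_le_iff_le add_le_cancel_right le_add_same_cancel2 diff_ge_0_iff_ge diff_minus_eq_add)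
  have n2: "\<forall>x\<in>Omega. 0 \<le> f2 x" using B topspace_Omega_top unfolding f2_def by (metis abs_le_iff diff_ge_0_iff_ge)
  have r3: "r / 3 > 0" using r by simp
  obtain L1 :: "'d atomT list" where L1: "\<forall>x\<in>Omega. gfun L1 x \<le> f1 x"
      "integral\<^sup>L \<mu> f1 - r/3 < integral\<^sup>L \<mu> (gfun L1)"
    using gfun_int_approx[OF f1 n1 mu r3] by blast
  obtain L2 :: "'d atomT list" where L2: "\<forall>x\<in>Omega. gfun L2 x \<le> f2 x"
      "integral\<^sup>L \<mu> f2 - r/3 < integral\<^sup>L \<mu> (gfun L2)"
    using gfun_int_approx[OF f2 n2 mu r3] by blast
  define I1 where "I1 = integral\<^sup>L \<mu> (gfun L1)"
  define I2 where "I2 = integral\<^sup>L \<mu> (gfun L2)"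
  obtain a1 where a1: "a1 \<in> \<rat>" "I1 - r/3 < a1" "a1 < I1" using Rats_dense_in_real[of "I1 - r/3" I1] r by auto
  obtain b1 where b1: "b1 \<in> \<rat>" "I1 < b1" "b1 < I1 + 1" using Rats_dense_in_real[of I1 "I1 + 1"] by auto
  obtain a2 where a2: "a2 \<in> \<rat>" "I2 - r/3 < a2" "a2 < I2" using Rats_dense_in_real[of "I2 - r/3" I2] r by auto
  obtain b2 where b2: "b2 \<in> \<rat>" "I2 < b2" "b2 < I2 + 1" using Rats_dense_in_real[of I2 "I2 + 1"] by auto
  obtain qa1 where qa1: "a1 = real_of_rat qa1" using a1(1) Rats_cases by blast
  obtain qb1 where qb1: "b1 = real_of_rat qb1" using b1(1) Rats_cases by blast
  obtain qa2 where qa2: "a2 = real_of_rat qa2" using a2(1) Rats_cases by blast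
  obtain qb2 where qb2: "b2 = real_of_rat qb2" using b2(1) Rats_cases by blast
  define K where "K = [(L1, qa1, qb1), (L2, qa2, qb2)]"
  have "\<mu> \<in> WS K" unfolding WS_def K_def using mu a1 b1 a2 b2 qa1 qb1 qa2 qb2 I1_def I2_def by auto
  moreover have "\<bar>integral\<^sup>L \<nu> f - integral\<^sup>L \<mu> f\<bar> < r" if nu: "\<nu> \<in> WS K" for \<nu>
  proof -
    have nub: "\<nu> \<in> borel_probs Omega_top" using nu unfolding WS_def by auto
    have w1: "a1 < integral\<^sup>L \<nu> (gfun L1)" and w2: "a2 < integral\<^sup>L \<nu> (gfun L2)"
      using nu unfolding WS_def K_def qa1 qa2 by auto
    have "integral\<^sup>L \<nu> (gfun L1) \<le> integral\<^sup>L \<nu> f1"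
      by (rule Cb_mono[OF gfun_Cb f1 nub]) (use L1 topspace_Omega_top in auto)
    moreover have "integral\<^sup>L \<nu> (gfun L2) \<le> integral\<^sup>L \<nu> f2"
      by (rule Cb_mono[OF gfun_Cb f2 nub]) (use L2 topspace_Omega_top in auto)
    moreover have "integral\<^sup>L \<nu> f1 = integral\<^sup>L \<nu> f + B" "integral\<^sup>L \<mu> f1 = integral\<^sup>L \<mu> f + B"
      unfolding f1_def using int_shift(1)[OF f nub] int_shift(1)[OF f mu] by auto
    moreover have "integral\<^sup>L \<nu> f2 = B - integral\<^sup>L \<nu> f" "integral\<^sup>L \<mu> f2 = B - integral\<^sup>L \<mu> f"
      unfolding f2_def using int_shift(2)[OF f nub] int_shift(2)[OF f mu] by auto
    ultimately show ?thesis using w1 w2 a1 a2 L1(2) L2(2) I1_def I2_def by linarith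
  qed
  ultimately show ?thesis by blast
qed

lemma topspace_weak: "topspace (weak_topology X) = borel_probs X"
proof -
  have "borel_probs X \<in> {{\<mu> \<in> borel_probs X. integral\<^sup>L \<mu> f \<in> U} | f U. f \<in> Cb X \<and> open U}"
    by (rule CollectI, rule exI[of _ "\<lambda>_. 0"], rule exI[of _ UNIV]) (auto simp: Cb_const)
  then show ?thesis unfolding weak_topology_def by auto
qed

lemma weak_cont:
  assumes f: "f \<in> Cb X"
  shows "continuous_map (weak_topology X) euclideanreal (\<lambda>\<nu>. integral\<^sup>L \<nu> f)"
  unfolding continuous_map_def
proof (intro conjI allI impI)
  show "(\<lambda>\<nu>. integral\<^sup>L \<nu> f) \<in> topspace (weak_topology X) \<rightarrow> topspace euclideanreal" by simp
  fix U :: "real set" assume "openin euclideanreal U"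
  then have "open U" by simp
  then have "{\<nu> \<in> borel_probs X. integral\<^sup>L \<nu> f \<in> U} \<in> {{\<mu> \<in> borel_probs X. integral\<^sup>L \<mu> f \<in> U} | f U. f \<in> Cb X \<and> open U}"
    using f by blast
  then show "openin (weak_topology X) {x \<in> topspace (weak_topology X). integral\<^sup>L x f \<in> U}"
    unfolding topspace_weak unfolding weak_topology_def openin_topology_generated_by_iff
    by (rule generate_topology_on.Basis)
qed

lemma weak_open_WS:
  assumes "openin (weak_topology (Omega_top :: (real \<Rightarrow> real^'d::finite) topology)) T" and "\<mu> \<in> T"
  shows "\<exists>K :: ('d atomT list \<times> rat \<times> rat) list. \<mu> \<in> WS K \<and> WS K \<subseteq> T"
proof -
  have "generate_topology_on {{\<mu> \<in> borel_probs Omega_top. integral\<^sup>L \<mu> f \<in> U} | f U. f \<in> Cb (Omega_top :: (real \<Rightarrow> real^'d) topology) \<and> open U} T"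
    using assms(1) unfolding weak_topology_def openin_topology_generated_by_iff .
  then show ?thesis using assms(2)
  proof (induction arbitrary: \<mu>)
    case Empty then show ?case by simp
  next
    case (Int a b)
    obtain K1 :: "('d atomT list \<times> rat \<times> rat) list" where "\<mu> \<in> WS K1" "WS K1 \<subseteq> a" using Int by blast
    moreover obtain K2 :: "('d atomT list \<times> rat \<times> rat) list" where "\<mu> \<in> WS K2" "WS K2 \<subseteq> b" using Int by blast
    ultimately show ?case by (intro exI[of _ "K1 @ K2"]) (auto simp: WS_append)
  next
    case (UN K)
    then obtain k where "k \<in> K" "\<mu> \<in> k" by blast
    then obtain K1 :: "('d atomT list \<times> rat \<times> rat) list" where "\<mu> \<in> WS K1" "WS K1 \<subseteq> k" using UN by blast
    then show ?case using \<open>k \<in> K\<close> by blast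
  next
    case (Basis s)
    then obtain f U where fU: "s = {\<mu> \<in> borel_probs Omega_top. integral\<^sup>L \<mu> f \<in> U}" "f \<in> Cb Omega_top" "open U"
      by blast
    have mu: "\<mu> \<in> borel_probs Omega_top" "integral\<^sup>L \<mu> f \<in> U" using Basis fU by auto
    obtain r where r: "r > 0" "ball (integral\<^sup>L \<mu> f) r \<subseteq> U" using fU(3) mu(2) open_contains_ball by blast
    obtain K :: "('d atomT list \<times> rat \<times> rat) list" where K: "\<mu> \<in> WS K" "\<forall>\<nu>\<in>WS K. \<bar>integral\<^sup>L \<nu> f - integral\<^sup>L \<mu> f\<bar> < r"
      using key_weak[OF fU(2) mu(1) r(1)] by blast
    have "WS K \<subseteq> s"
    proof
      fix \<nu> assume nu: "\<nu> \<in> WS K"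
      then have "\<nu> \<in> borel_probs Omega_top" unfolding WS_def by auto
      moreover have "integral\<^sup>L \<nu> f \<in> ball (integral\<^sup>L \<mu> f) r"
        using K(2) nu by (simp add: dist_real_def abs_minus_commute[of "integral\<^sup>L \<mu> f"])
      ultimately show "\<nu> \<in> s" using r fU(1) by auto
    qed
    then show ?case using K(1) by blast
  qed
qed


lemma sup_le_closure:
  fixes Q :: "nat \<Rightarrow> 'a measure"
  assumes X: "X \<in> Cb T" and QP: "range Q \<subseteq> borel_probs T"
    and nu: "\<nu> \<in> weak_topology T closure_of range Q"
  shows "integral\<^sup>L \<nu> X \<le> (SUP n. integral\<^sup>L (Q n) X)"
proof (rule ccontr)
  assume "\<not> ?thesis"
  then have lt: "(SUP n. integral\<^sup>L (Q n) X) < integral\<^sup>L \<nu> X" by simp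
  obtain B where B: "\<forall>x\<in>topspace T. \<bar>X x\<bar> \<le> B" using Cb_bound[OF X] by auto
  have bdd: "bdd_above (range (\<lambda>n. integral\<^sup>L (Q n) X))"
  proof (rule bdd_aboveI[of _ B])
    fix y assume "y \<in> range (\<lambda>n. integral\<^sup>L (Q n) X)"
    then obtain n where y: "y = integral\<^sup>L (Q n) X" by blast
    have "Q n \<in> borel_probs T" using QP by blast
    then have "\<bar>y\<bar> \<le> B" using Cb_int_bound[OF X _ B] y by blast
    then show "y \<le> B" by linarith
  qed
  let ?s = "SUP n. integral\<^sup>L (Q n) X"
  have O: "openin (weak_topology T) {\<mu> \<in> topspace (weak_topology T). integral\<^sup>L \<mu> X \<in> {?s<..}}"
    by (rule openin_continuous_map_preimage[OF weak_cont[OF X]]) simp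
  have nuS: "\<nu> \<in> {\<mu> \<in> topspace (weak_topology T). integral\<^sup>L \<mu> X \<in> {?s<..}}"
  proof -
    have "\<nu> \<in> topspace (weak_topology T)" using nu unfolding in_closure_of by blast
    then show ?thesis using lt by simp
  qed
  have cl: "\<forall>T'. \<nu> \<in> T' \<and> openin (weak_topology T) T' \<longrightarrow> (\<exists>y. y \<in> range Q \<and> y \<in> T')"
    using nu unfolding in_closure_of by blast
  obtain y where y: "y \<in> range Q" "y \<in> {\<mu> \<in> topspace (weak_topology T). integral\<^sup>L \<mu> X \<in> {?s<..}}"
    using cl[rule_format, OF conjI[OF nuS O]] by blast
  then obtain n where "y = Q n" by blast
  then have "integral\<^sup>L (Q n) X > ?s" using y by simp
  moreover have "integral\<^sup>L (Q n) X \<le> ?s" by (rule cSUP_upper[OF _ bdd]) simp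
  ultimately show False by simp
qed

lemma suminf_swap_ennreal:
  fixes f :: "nat \<Rightarrow> nat \<Rightarrow> ennreal"
  shows "(\<Sum>n. \<Sum>i. f n i) = (\<Sum>i. \<Sum>n. f n i)"
proof -
  have "(\<Sum>n. \<Sum>i. f n i) = (\<Sum>n. \<integral>\<^sup>+i. f n i \<partial>count_space UNIV)"
    by (simp add: nn_integral_count_space_nat)
  also have "\<dots> = (\<integral>\<^sup>+i. (\<Sum>n. f n i) \<partial>count_space UNIV)"
    by (rule nn_integral_suminf[symmetric]) simp
  also have "\<dots> = (\<Sum>i. \<Sum>n. f n i)"
    by (simp add: nn_integral_count_space_nat)
  finally show ?thesis .
qed

lemma mixture_emeasure:
  assumes QP: "\<And>n. Q n \<in> borel_probs X" and A: "A \<in> sets (borel_of X)"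
  shows "emeasure (mixture X Q) A = (\<Sum>n. emeasure (Q n) A / 2 ^ Suc n)"
  unfolding mixture_def
proof (rule emeasure_measure_of_sigma)
  show "sigma_algebra (topspace X) (sets (borel_of X))"
    unfolding sets_borel_of by (rule sigma_algebra_sigma_sets) (auto dest: openin_subset)
  show "positive (sets (borel_of X)) (\<lambda>A. \<Sum>n. emeasure (Q n) A / 2 ^ Suc n)"
    unfolding positive_def by simp
  show "countably_additive (sets (borel_of X)) (\<lambda>A. \<Sum>n. emeasure (Q n) A / 2 ^ Suc n)"
    unfolding countably_additive_def
  proof (intro allI impI)
    fix B :: "nat \<Rightarrow> _" assume B: "range B \<subseteq> sets (borel_of X)" "disjoint_family B"
    have "(\<Sum>i. \<Sum>n. emeasure (Q n) (B i) / 2 ^ Suc n) = (\<Sum>n. \<Sum>i. emeasure (Q n) (B i) / 2 ^ Suc n)"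
      by (rule suminf_swap_ennreal[symmetric])
    also have "\<dots> = (\<Sum>n. (\<Sum>i. emeasure (Q n) (B i)) / 2 ^ Suc n)"
      by simp
    also have "\<dots> = (\<Sum>n. emeasure (Q n) (\<Union>i. B i) / 2 ^ Suc n)"
      using B bp_sets[OF QP] by (simp add: suminf_emeasure)
    finally show "(\<Sum>i. \<Sum>n. emeasure (Q n) (B i) / 2 ^ Suc n) = (\<Sum>n. emeasure (Q n) (\<Union> (range B)) / 2 ^ Suc n)" .
  qed
qed (rule A)

theorem proposition6p1:
  fixes H :: "((real \<Rightarrow> real^'d::finite) \<Rightarrow> real) set"
    and E :: "((real \<Rightarrow> real^'d) \<Rightarrow> real) \<Rightarrow> real"
    and \<P> :: "(real \<Rightarrow> real^'d) measure set"
  assumes "H \<subseteq> Cb Omega_top"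
    and "vector_lattice_with_one Omega H"
    and "sublinear_expectation Omega H E"
    and "\<P> \<noteq> {}" and "weakly_rel_compact Omega_top \<P>"
    and "\<forall>f\<in>H. E f = (SUP P\<in>\<P>. integral\<^sup>L P f)"
  shows "\<exists>Q :: nat \<Rightarrow> (real \<Rightarrow> real^'d) measure.
     range Q \<subseteq> \<P> \<and> weakly_rel_compact Omega_top (range Q) \<and>
     (\<forall>X\<in>Cb Omega_top. (SUP P\<in>\<P>. integral\<^sup>L P X) = (SUP n. integral\<^sup>L (Q n) X)) \<and>
     (\<forall>f\<in>Cb Omega_top. (\<forall>w\<in>Omega. 0 \<le> f w) \<longrightarrow>
        ((SUP P\<in>\<P>. integral\<^sup>L P f) = 0 \<longleftrightarrow> (AE w in mixture Omega_top Q. f w = 0))) \<and>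
     (\<forall>X\<in>Cb Omega_top. \<exists>QX \<in> weak_topology Omega_top closure_of range Q.
        (SUP P\<in>\<P>. integral\<^sup>L P X) = integral\<^sup>L QX X)"
proof -
  let ?W = "weak_topology (Omega_top :: (real \<Rightarrow> real^'d) topology)"
  let ?bp = "borel_probs (Omega_top :: (real \<Rightarrow> real^'d) topology)"
  have Psub: "\<P> \<subseteq> ?bp" and comp: "compactin ?W (?W closure_of \<P>)"
    using assms(5) unfolding weakly_rel_compact_def by auto
  obtain P0 where P0: "P0 \<in> \<P>" using assms(4) by blast
  define Qf :: "('d atomT list \<times> rat \<times> rat) list \<Rightarrow> (real \<Rightarrow> real^'d) measure" where
    "Qf K = (if WS K \<inter> \<P> \<noteq> {} then (SOME \<nu>. \<nu> \<in> WS K \<inter> \<P>) else P0)" for K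
  define Q where "Q n = Qf (from_nat n)" for n
  have QfP: "Qf K \<in> \<P>" for K
    unfolding Qf_def using P0 by (auto intro: someI2_ex)
  have QfW: "WS K \<inter> \<P> \<noteq> {} \<Longrightarrow> Qf K \<in> WS K" for K
    unfolding Qf_def by (auto intro: someI2_ex)
  have QP: "range Q \<subseteq> \<P>" unfolding Q_def using QfP by auto
  have Qbp: "range Q \<subseteq> ?bp" using QP Psub by auto
  have dense: "\<P> \<subseteq> ?W closure_of range Q"
  proof
    fix \<mu> assume mu: "\<mu> \<in> \<P>"
    show "\<mu> \<in> ?W closure_of range Q"
      unfolding in_closure_of
    proof (intro conjI allI impI)
      show "\<mu> \<in> topspace ?W" using mu Psub topspace_weak by auto
      fix T assume "\<mu> \<in> T \<and> openin ?W T"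
      then obtain K :: "('d atomT list \<times> rat \<times> rat) list" where K: "\<mu> \<in> WS K" "WS K \<subseteq> T"
        using weak_open_WS by blast
      have "Qf K \<in> WS K" using QfW K(1) mu by blast
      moreover have "Qf K = Q (to_nat K)" unfolding Q_def by simp
      ultimately show "\<exists>y. y \<in> range Q \<and> y \<in> T" using K(2) by blast
    qed
  qed
  have clsub: "?W closure_of range Q \<subseteq> ?W closure_of \<P>"
    by (rule closure_of_mono[OF QP])
  have compQ: "compactin ?W (?W closure_of range Q)"
    by (rule closed_compactin[OF comp clsub]) simp
  have QinCl: "range Q \<subseteq> ?W closure_of range Q"
    by (rule closure_of_subset) (use Qbp topspace_weak in auto)
  have bound: "\<exists>B. \<forall>\<nu>\<in>?bp. \<bar>integral\<^sup>L \<nu> X\<bar> \<le> B" if X: "X \<in> Cb Omega_top" for X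
  proof -
    obtain B where B: "\<forall>x\<in>topspace Omega_top. \<bar>X x\<bar> \<le> B" using Cb_bound[OF X] by auto
    then show ?thesis using Cb_int_bound[OF X _ B] by blast
  qed
  have sup_eq: "(SUP P\<in>\<P>. integral\<^sup>L P X) = (SUP n. integral\<^sup>L (Q n) X)" if X: "X \<in> Cb Omega_top" for X
  proof -
    obtain B where B: "\<forall>\<nu>\<in>?bp. \<bar>integral\<^sup>L \<nu> X\<bar> \<le> B" using bound[OF X] by blast
    have bddP: "bdd_above ((\<lambda>P. integral\<^sup>L P X) ` \<P>)"
      using B Psub by (intro bdd_aboveI[of _ B]) (auto dest!: bspec[of _ _ "_"] simp: abs_le_iff)
    show ?thesis
    proof (rule antisym)
      show "(SUP P\<in>\<P>. integral\<^sup>L P X) \<le> (SUP n. integral\<^sup>L (Q n) X)"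
      proof (rule cSUP_least[OF assms(4)])
        fix P assume "P \<in> \<P>"
        then show "integral\<^sup>L P X \<le> (SUP n. integral\<^sup>L (Q n) X)"
          using sup_le_closure[OF X Qbp] dense by blast
      qed
      show "(SUP n. integral\<^sup>L (Q n) X) \<le> (SUP P\<in>\<P>. integral\<^sup>L P X)"
      proof (rule cSUP_least)
        fix n
        show "integral\<^sup>L (Q n) X \<le> (SUP P\<in>\<P>. integral\<^sup>L P X)"
          by (rule cSUP_upper[OF _ bddP]) (use QP in auto)
      qed simp
    qed
  qed
  have part2: "weakly_rel_compact Omega_top (range Q)"
    unfolding weakly_rel_compact_def using Qbp compQ by simp
  have part5: "\<exists>QX \<in> ?W closure_of range Q. (SUP P\<in>\<P>. integral\<^sup>L P X) = integral\<^sup>L QX X"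
    if X: "X \<in> Cb Omega_top" for X
  proof -
    have "compactin euclideanreal ((\<lambda>\<nu>. integral\<^sup>L \<nu> X) ` (?W closure_of range Q))"
      by (rule image_compactin[OF compQ weak_cont[OF X]])
    then have cpt: "compact ((\<lambda>\<nu>. integral\<^sup>L \<nu> X) ` (?W closure_of range Q))" by simp
    have ne: "(\<lambda>\<nu>. integral\<^sup>L \<nu> X) ` (?W closure_of range Q) \<noteq> {}" using QinCl by auto
    obtain s where s: "s \<in> (\<lambda>\<nu>. integral\<^sup>L \<nu> X) ` (?W closure_of range Q)"
      "\<forall>y\<in>(\<lambda>\<nu>. integral\<^sup>L \<nu> X) ` (?W closure_of range Q). y \<le> s"
      using compact_attains_sup[OF cpt ne] by blast
    obtain QX where QX: "QX \<in> ?W closure_of range Q" "s = integral\<^sup>L QX X" using s(1) by blast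
    have "(SUP n. integral\<^sup>L (Q n) X) \<le> integral\<^sup>L QX X"
    proof (rule cSUP_least)
      fix n show "integral\<^sup>L (Q n) X \<le> integral\<^sup>L QX X" using s(2) QX(2) QinCl by blast
    qed simp
    moreover have "integral\<^sup>L QX X \<le> (SUP n. integral\<^sup>L (Q n) X)"
      by (rule sup_le_closure[OF X Qbp QX(1)])
    ultimately show ?thesis using sup_eq[OF X] QX(1) by (intro bexI[of _ QX]) auto
  qed
  have part4: "(SUP P\<in>\<P>. integral\<^sup>L P f) = 0 \<longleftrightarrow> (AE w in mixture Omega_top Q. f w = 0)"
    if f: "f \<in> Cb Omega_top" and nn: "\<forall>w\<in>Omega. 0 \<le> f w" for f
  proof -
    have Qn: "Q n \<in> ?bp" for n using Qbp by auto
    define N where "N = {w \<in> Omega. f w \<noteq> 0}"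
    have "openin Omega_top {w \<in> topspace Omega_top. f w \<in> - {0}}"
      by (rule openin_continuous_map_preimage) (use f in \<open>auto simp: Cb_def\<close>)
    then have Nsets: "N \<in> sets (borel_of Omega_top)"
      unfolding N_def sets_borel_of topspace_Omega_top by (auto intro: sigma_sets.Basic)
    have spQ: "space (Q n) = Omega" for n using bp_space[OF Qn] topspace_Omega_top by simp
    have intnn: "0 \<le> integral\<^sup>L (Q n) f" for n
      by (rule integral_nonneg_AE) (use nn spQ in auto)
    have i0: "integral\<^sup>L (Q n) f = 0 \<longleftrightarrow> emeasure (Q n) N = 0" for n
    proof -
      have "integral\<^sup>L (Q n) f = 0 \<longleftrightarrow> (AE w in Q n. f w = 0)"
        by (rule integral_nonneg_eq_0_iff_AE) (use Cb_int[OF f Qn] nn spQ in auto)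
      also have "\<dots> \<longleftrightarrow> emeasure (Q n) N = 0"
        by (rule AE_iff_measurable) (use Nsets bp_sets[OF Qn] spQ N_def in auto)
      finally show ?thesis .
    qed
    obtain B where B: "\<forall>\<nu>\<in>?bp. \<bar>integral\<^sup>L \<nu> f\<bar> \<le> B" using bound[OF f] by blast
    have bddQ: "bdd_above (range (\<lambda>n. integral\<^sup>L (Q n) f))"
      using B Qn by (intro bdd_aboveI[of _ B]) (auto simp: abs_le_iff)
    have s0: "(SUP n. integral\<^sup>L (Q n) f) = 0 \<longleftrightarrow> (\<forall>n. integral\<^sup>L (Q n) f = 0)"
    proof
      assume h: "(SUP n. integral\<^sup>L (Q n) f) = 0"
      show "\<forall>n. integral\<^sup>L (Q n) f = 0"
      proof
        fix n
        have "integral\<^sup>L (Q n) f \<le> (SUP n. integral\<^sup>L (Q n) f)" by (rule cSUP_upper[OF _ bddQ]) simp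
        then show "integral\<^sup>L (Q n) f = 0" using h intnn[of n] by simp
      qed
    next
      assume "\<forall>n. integral\<^sup>L (Q n) f = 0"
      then show "(SUP n. integral\<^sup>L (Q n) f) = 0" by simp
    qed
    have SA: "sigma_algebra (topspace Omega_top) (sets (borel_of Omega_top :: (real \<Rightarrow> real^'d) measure))"
      unfolding sets_borel_of by (rule sigma_algebra_sigma_sets) (auto dest: openin_subset)
    have sp: "space (mixture Omega_top Q) = Omega"
      unfolding mixture_def using sigma_algebra.space_measure_of_eq[OF SA] topspace_Omega_top by simp
    have msets: "sets (mixture Omega_top Q) = sets (borel_of Omega_top)"
      unfolding mixture_def sigma_algebra.sets_measure_of_eq[OF SA] ..
    have "(AE w in mixture Omega_top Q. f w = 0) \<longleftrightarrow> emeasure (mixture Omega_top Q) N = 0"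
      by (rule AE_iff_measurable) (use Nsets msets sp N_def in auto)
    also have "\<dots> \<longleftrightarrow> (\<Sum>n. emeasure (Q n) N / 2 ^ Suc n) = 0"
      using mixture_emeasure[OF Qn Nsets] by simp
    also have "\<dots> \<longleftrightarrow> (\<forall>n. emeasure (Q n) N / 2 ^ Suc n = 0)"
      by (rule suminf_eq_zero_iff) auto
    also have "\<dots> \<longleftrightarrow> (\<forall>n. emeasure (Q n) N = 0)"
      by (simp add: ennreal_mult_eq_top_iff power_eq_top_ennreal)
    finally show ?thesis using sup_eq[OF f] s0 i0 by simp
  qed
  show ?thesis
    by (rule exI[of _ Q]) (use QP part2 sup_eq part4 part5 in blast)
qed

end
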